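(* Consider a one-site PTM cascade with $n\ge1$ layers. Fix all rate constants and all total amounts (all positive) except $\overline{S}_i$ for some $i\in\{1,\dots,n\}$. Then, as $\overline{S}_i$ increases, for each $j\in\{1,\dots,i\}$ the BMSS value of $S_j^1$ strictly increases if $i-j$ is even and strictly decreases if $i-j$ is odd.
   Context: A one-site PTM cascade with $n$ layers has species $E=S_0^1$ and, for $i=1,\dots,n$, $S_i^0,S_i^1,F_i,Y_i^0,Y_i^1$, with reactions $S_{i-1}^1+S_i^0 \rightleftharpoons Y_i^0 \to S_{i-1}^1+S_i^1$ (rate constants $a_i^0,b_i^0,c_i^0$) and $F_i+S_i^1\rightleftharpoons Y_i^1\to F_i+S_i^0$ (rate constants $a_i^1,b_i^1,c_i^1$), all positive, mass-action kinetics. Put $\delta_i=a_i^1/(b_i^1+c_i^1)$, $\gamma_i=(c_i^1/c_i^0)\delta_i$, $\lambda_i=\frac{b_i^0+c_i^0}{a_i^0}\gamma_i$. Given total amounts $\overline{E},\overline{F}_i,\overline{S}_i$, a steady state is a real solution of: $Y_i^0=\gamma_iF_iS_i^1$, $Y_i^1=\delta_iF_iS_i^1$, $\lambda_iF_iS_i^1=S_i^0S_{i-1}^1$, $\overline{F}_i=F_i+Y_i^1$, $\overline{S}_i=S_i^0+S_i^1+Y_i^0+Y_i^1+Y_{i+1}^0$ ($i=1,\dots,n$, $Y_{n+1}^0:=0$), $\overline{E}=E+Y_1^0$. A BMSS is a steady state with positive total amounts and all concentrations nonnegative; for positive total amounts it exists and is unique. *)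

theory Defs
  imports Main "HOL.Real"
begin

text \<open>Rate constants are functions
nat \<Rightarrow> real indexed by the layer i = 1..n. Concentrations:
S0 i = S_i^0, S1 i = S_i^1 (with S1 0 = E = S_0^1), F i, Y0 i = Y_i^0, Y1 i = Y_i^1.\<close>

definition ptm_delta :: "(nat \<Rightarrow> real) \<Rightarrow> (nat \<Rightarrow> real) \<Rightarrow> (nat \<Rightarrow> real) \<Rightarrow> nat \<Rightarrow> real" where
  "ptm_delta a1 b1 c1 i = a1 i / (b1 i + c1 i)"

definition ptm_gamma :: "(nat \<Rightarrow> real) \<Rightarrow> (nat \<Rightarrow> real) \<Rightarrow> (nat \<Rightarrow> real) \<Rightarrow> (nat \<Rightarrow> real) \<Rightarrow> nat \<Rightarrow> real" where
  "ptm_gamma c0 a1 b1 c1 i = (c1 i / c0 i) * ptm_delta a1 b1 c1 i"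

definition ptm_lambda :: "(nat \<Rightarrow> real) \<Rightarrow> (nat \<Rightarrow> real) \<Rightarrow> (nat \<Rightarrow> real) \<Rightarrow>
    (nat \<Rightarrow> real) \<Rightarrow> (nat \<Rightarrow> real) \<Rightarrow> (nat \<Rightarrow> real) \<Rightarrow> nat \<Rightarrow> real" where
  "ptm_lambda a0 b0 c0 a1 b1 c1 i = ((b0 i + c0 i) / a0 i) * ptm_gamma c0 a1 b1 c1 i"

definition ptm_steady_state ::
  "nat \<Rightarrow> (nat \<Rightarrow> real) \<Rightarrow> (nat \<Rightarrow> real) \<Rightarrow> (nat \<Rightarrow> real) \<Rightarrow>
   (nat \<Rightarrow> real) \<Rightarrow> (nat \<Rightarrow> real) \<Rightarrow> (nat \<Rightarrow> real) \<Rightarrow>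
   real \<Rightarrow> (nat \<Rightarrow> real) \<Rightarrow> (nat \<Rightarrow> real) \<Rightarrow>
   (nat \<Rightarrow> real) \<Rightarrow> (nat \<Rightarrow> real) \<Rightarrow> (nat \<Rightarrow> real) \<Rightarrow> (nat \<Rightarrow> real) \<Rightarrow> (nat \<Rightarrow> real) \<Rightarrow> bool" where
  "ptm_steady_state n a0 b0 c0 a1 b1 c1 Ebar Fbar Sbar S0 S1 F Y0 Y1 \<longleftrightarrow>
     (\<forall>i\<in>{1..n}.
        Y0 i = ptm_gamma c0 a1 b1 c1 i * F i * S1 i \<and>
        Y1 i = ptm_delta a1 b1 c1 i * F i * S1 i \<and>
        ptm_lambda a0 b0 c0 a1 b1 c1 i * F i * S1 i = S0 i * S1 (i - 1) \<and>
        Fbar i = F i + Y1 i \<and>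
        Sbar i = S0 i + S1 i + Y0 i + Y1 i + (if i < n then Y0 (i + 1) else 0)) \<and>
     Ebar = S1 0 + Y0 1"

text \<open>BMSS: steady state with all concentrations nonnegative
(total amounts are assumed positive separately).\<close>
definition ptm_bmss ::
  "nat \<Rightarrow> (nat \<Rightarrow> real) \<Rightarrow> (nat \<Rightarrow> real) \<Rightarrow> (nat \<Rightarrow> real) \<Rightarrow>
   (nat \<Rightarrow> real) \<Rightarrow> (nat \<Rightarrow> real) \<Rightarrow> (nat \<Rightarrow> real) \<Rightarrow>
   real \<Rightarrow> (nat \<Rightarrow> real) \<Rightarrow> (nat \<Rightarrow> real) \<Rightarrow>
   (nat \<Rightarrow> real) \<Rightarrow> (nat \<Rightarrow> real) \<Rightarrow> (nat \<Rightarrow> real) \<Rightarrow> (nat \<Rightarrow> real) \<Rightarrow> (nat \<Rightarrow> real) \<Rightarrow> bool" where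
  "ptm_bmss n a0 b0 c0 a1 b1 c1 Ebar Fbar Sbar S0 S1 F Y0 Y1 \<longleftrightarrow>
     ptm_steady_state n a0 b0 c0 a1 b1 c1 Ebar Fbar Sbar S0 S1 F Y0 Y1 \<and>
     S1 0 \<ge> 0 \<and>
     (\<forall>i\<in>{1..n}. S0 i \<ge> 0 \<and> S1 i \<ge> 0 \<and> F i \<ge> 0 \<and> Y0 i \<ge> 0 \<and> Y1 i \<ge> 0)"

end

theory Submission
  imports Defs
begin


lemma sgn_add_same: fixes a b :: real shows "sgn a = s \<Longrightarrow> sgn b = s \<Longrightarrow> sgn (a+b) = s"
  by (auto simp: sgn_if split: if_splits)

lemma sgn_cmult: fixes a c :: real shows "c > 0 \<Longrightarrow> sgn (c*a) = sgn a"
  by (simp add: sgn_mult)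

lemma L: fixes q x l p q' x' p' s :: real
  assumes "q*x = l*p" "q'*x' = l*p'" "q>0" "x>0" "q'>0" "x'>0" "l>0"
    "sgn(p'-p) = s" "sgn(x'-x) = -s"
  shows "sgn(q'-q) = s"
proof -
  consider "p' > p" | "p' = p" | "p' < p" by linarith
  then show ?thesis
  proof cases
    case 1
    then have s: "s = 1" "x' < x" using assms(8,9) by (auto simp: sgn_if split: if_splits)
    have "q*x' < q'*x'"
    proof -
      have "q*x' < q*x" using s assms(3) by simp
      also have "q*x = l*p" using assms(1) by simp
      also have "\<dots> < l*p'" using 1 assms(7) by simp
      also have "\<dots> = q'*x'" using assms(2) by simp
      finally show ?thesis .
    qed
    then have "q' > q" using assms(6) by simp
    then show ?thesis using s by simp
  next
    case 2
    then have s: "s = 0" "x' = x" using assms(8,9) by (auto simp: sgn_if split: if_splits)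
    have "q'*x = q*x" using assms(1,2) 2 s by simp
    then have "q' = q" using assms(4) by simp
    then show ?thesis using s by simp
  next
    case 3
    then have s: "s = -1" "x' > x" using assms(8,9) by (auto simp: sgn_if split: if_splits)
    have "q'*x' < q*x'"
    proof -
      have "q'*x' = l*p'" using assms(2) by simp
      also have "\<dots> < l*p" using 3 assms(7) by simp
      also have "\<dots> = q*x" using assms(1) by simp
      also have "\<dots> < q*x'" using s assms(3) by simp
      finally show ?thesis .
    qed
    then have "q' < q" using assms(6) by simp
    then show ?thesis using s by simp
  qed
qed

lemma Pl: fixes F F' d x x' B :: real
  assumes "F*(1+d*x) = B" "F'*(1+d*x') = B" "d>0" "B>0" "x\<ge>0" "x'\<ge>0"
  shows "sgn(F'*x' - F*x) = sgn(x'-x)"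
proof -
  have h1: "1+d*x > 0" "1+d*x' > 0" using assms by (auto intro: add_pos_nonneg)
  have e: "F = B/(1+d*x)" "F' = B/(1+d*x')" using assms(1,2) h1 by (auto simp: field_simps)
  have "F'*x' - F*x = B*(x'-x)/((1+d*x)*(1+d*x'))" unfolding e using h1 by (simp add: field_simps)
  then show ?thesis using h1 assms(4) by (simp add: sgn_mult sgn_divide)
qed

lemma abstract_main:
  fixes x x' q q' p p' l g c Sb Sb' :: "nat \<Rightarrow> real" and E :: real and n i :: nat
  assumes xpos: "\<And>k. k \<le> n \<Longrightarrow> x k > 0 \<and> x' k > 0"
    and qpos: "\<And>k. k \<in> {1..n} \<Longrightarrow> q k > 0 \<and> q' k > 0 \<and> l k > 0 \<and> g k > 0 \<and> c k > 0"
    and psg: "\<And>k. k \<in> {1..n} \<Longrightarrow> sgn (p' k - p k) = sgn (x' k - x k)"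
    and qx: "\<And>k. k \<in> {1..n} \<Longrightarrow> q k * x (k-1) = l k * p k \<and> q' k * x' (k-1) = l k * p' k"
    and e0: "E = x 0 + g 1 * p 1" "E = x' 0 + g 1 * p' 1"
    and lay: "\<And>k. k \<in> {1..n} \<Longrightarrow> Sb k = q k + x k + c k * p k + (if k<n then g (k+1) * p (k+1) else 0)"
    and lay': "\<And>k. k \<in> {1..n} \<Longrightarrow> Sb' k = q' k + x' k + c k * p' k + (if k<n then g (k+1) * p' (k+1) else 0)"
    and i: "i \<in> {1..n}"
    and eq: "\<And>k. k \<in> {1..n} \<Longrightarrow> k \<noteq> i \<Longrightarrow> Sb' k = Sb k"
    and lt: "Sb i < Sb' i"
  shows "\<And>j. j \<in> {1..i} \<Longrightarrow> sgn (x' j - x j) = (-1)^(i-j)"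
proof -
  define D where "D k = x' k - x k" for k
  have own: "sgn ((q' k + x' k + c k * p' k) - (q k + x k + c k * p k)) = sgn (D k)"
    if k: "k \<in> {1..n}" and h: "sgn (D (k-1)) = - sgn (D k)" for k
  proof -
    have "sgn (q' k - q k) = sgn (D k)"
      apply (rule L[of "q k" "x (k-1)" "l k" "p k" "q' k" "x' (k-1)" "p' k"])
      using qx[OF k] qpos[OF k] xpos[of k] xpos[of "k-1"] k psg[OF k] h unfolding D_def by auto
    moreover have "sgn (c k * p' k - c k * p k) = sgn (D k)"
      using psg[OF k] qpos[OF k] unfolding D_def by (simp add: right_diff_distrib[symmetric] sgn_mult)
    ultimately have "sgn ((q' k - q k) + (D k + (c k * p' k - c k * p k))) = sgn (D k)"
      by (intro sgn_add_same) (auto intro: sgn_add_same)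
    then show ?thesis unfolding D_def by (simp add: algebra_simps)
  qed
  have top: "\<forall>k. 1 \<le> k \<longrightarrow> k \<le> i \<longrightarrow> sgn (D k) = - sgn (D (k-1))"
  proof (intro allI)
    fix k show "1 \<le> k \<longrightarrow> k \<le> i \<longrightarrow> sgn (D k) = - sgn (D (k-1))"
    proof (induction k)
      case 0 then show ?case by simp
    next
      case (Suc k)
      show ?case
      proof (intro impI)
        assume a: "1 \<le> Suc k" "Suc k \<le> i"
        show "sgn (D (Suc k)) = - sgn (D (Suc k - 1))"
        proof (cases "k = 0")
          case True
          have "D 0 = - (g 1 * (p' 1 - p 1))" using e0 unfolding D_def by (simp add: algebra_simps)
          moreover have "sgn (g 1 * (p' 1 - p 1)) = sgn (D 1)" using psg[of 1] qpos[of 1] i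
            unfolding D_def by (auto simp: sgn_mult)
          ultimately show ?thesis using True by (simp add: sgn_minus)
        next
          case False
          have k: "k \<in> {1..n}" "k < n" "k \<noteq> i" using False a i by auto
          have ih: "sgn (D (k-1)) = - sgn (D k)" using Suc.IH False a by auto
          have o: "sgn ((q' k + x' k + c k * p' k) - (q k + x k + c k * p k)) = sgn (D k)"
            using own[OF k(1) ih] .
          have "Sb' k = Sb k" using eq k by auto
          then have "(q' k + x' k + c k * p' k) - (q k + x k + c k * p k) = - (g (k+1) * (p' (k+1) - p (k+1)))"
            using lay[OF k(1)] lay'[OF k(1)] k(2) by (simp add: algebra_simps)
          moreover have "sgn (g (k+1) * (p' (k+1) - p (k+1))) = sgn (D (k+1))"
            using psg[of "k+1"] qpos[of "k+1"] k unfolding D_def by (auto simp: sgn_mult)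
          ultimately show ?thesis using o by (simp add: sgn_minus)
        qed
      qed
    qed
  qed
  have bot: "k < n \<longrightarrow> sgn (D (k+1)) = sgn (D k)" if "i \<le> k" "k \<le> n" for k
    using that(2,1)
  proof (induction k rule: inc_induct)
    case base then show ?case by simp
  next
    case (step k)
    show ?case
    proof
      assume "k < n"
      have k1: "k+1 \<in> {1..n}" "k+1 \<noteq> i" using step i by auto
      define s where "s = sgn (D (k+1))"
      have t1: "sgn ((x' (k+1) + c (k+1) * p' (k+1)) - (x (k+1) + c (k+1) * p (k+1))) = s"
      proof -
        have "sgn (c (k+1) * p' (k+1) - c (k+1) * p (k+1)) = s"
          using psg[OF k1(1)] qpos[OF k1(1)] unfolding D_def s_def by (simp add: right_diff_distrib[symmetric] sgn_mult)
        then have "sgn (D (k+1) + (c (k+1) * p' (k+1) - c (k+1) * p (k+1))) = s"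
          by (intro sgn_add_same) (auto simp: s_def)
        then show ?thesis unfolding D_def by (simp add: algebra_simps)
      qed
      have t2: "sgn ((x' (k+1) + c (k+1) * p' (k+1) + (if k+1<n then g (k+2) * p' (k+2) else 0))
             - (x (k+1) + c (k+1) * p (k+1) + (if k+1<n then g (k+2) * p (k+2) else 0))) = s"
      proof (cases "k+1 < n")
        case True
        have "sgn (D (k+2)) = s" using step.IH step.prems True unfolding s_def by simp
        then have "sgn (g (k+2) * p' (k+2) - g (k+2) * p (k+2)) = s"
          using psg[of "k+2"] qpos[of "k+2"] True unfolding D_def by (simp add: right_diff_distrib[symmetric] sgn_mult)
        then have "sgn (((x' (k+1) + c (k+1) * p' (k+1)) - (x (k+1) + c (k+1) * p (k+1))) + (g (k+2) * p' (k+2) - g (k+2) * p (k+2))) = s"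
          using t1 by (intro sgn_add_same)
        then show ?thesis using True by (simp add: algebra_simps)
      next
        case False then show ?thesis using t1 by simp
      qed
      have kk: "k+1+1 = k+2" by simp
      have "Sb' (k+1) = Sb (k+1)" using eq k1 by auto
      then have "q' (k+1) - q (k+1) = - ((x' (k+1) + c (k+1) * p' (k+1) + (if k+1<n then g (k+2) * p' (k+2) else 0))
             - (x (k+1) + c (k+1) * p (k+1) + (if k+1<n then g (k+2) * p (k+2) else 0)))"
        using lay[OF k1(1), unfolded kk] lay'[OF k1(1), unfolded kk] by (simp add: algebra_simps)
      then have qs: "sgn (q' (k+1) - q (k+1)) = - s" using t2 by (metis sgn_minus)
      have "sgn (x' k - x k) = s"
        apply (rule L[of "x k" "q (k+1)" "l (k+1)" "p (k+1)" "x' k" "q' (k+1)" "p' (k+1)"])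
        using qx[OF k1(1)] qpos[OF k1(1)] xpos[of k] step psg[OF k1(1)] qs unfolding s_def D_def
        by (auto simp: mult.commute)
      then show "sgn (D (k+1)) = sgn (D k)" unfolding s_def D_def by simp
    qed
  qed
  have mid: "sgn (D i) = 1"
  proof -
    define s where "s = sgn (D i)"
    have i1: "i \<in> {1..n}" using i by simp
    have o: "sgn ((q' i + x' i + c i * p' i) - (q i + x i + c i * p i)) = s"
      using own[OF i1] top i unfolding s_def by auto
    have t2: "sgn (Sb' i - Sb i) = s"
    proof (cases "i < n")
      case True
      have "sgn (D (i+1)) = s" using bot[of i] True unfolding s_def by simp
      then have "sgn (g (i+1) * p' (i+1) - g (i+1) * p (i+1)) = s"
        using psg[of "i+1"] qpos[of "i+1"] True unfolding D_def by (simp add: right_diff_distrib[symmetric] sgn_mult)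
      then have "sgn (((q' i + x' i + c i * p' i) - (q i + x i + c i * p i)) + (g (i+1) * p' (i+1) - g (i+1) * p (i+1))) = s"
        using o by (intro sgn_add_same)
      then show ?thesis using True lay[OF i1] lay'[OF i1] by (simp add: algebra_simps)
    next
      case False then show ?thesis using o lay[OF i1] lay'[OF i1] by simp
    qed
    then show ?thesis using lt unfolding s_def by simp
  qed
  fix j assume j: "j \<in> {1..i}"
  have "j \<le> i" using j by simp
  then have "1 \<le> j \<longrightarrow> sgn (D j) = (-1)^(i-j)"
  proof (induction j rule: inc_induct)
    case base then show ?case using mid by simp
  next
    case (step j)
    show ?case
    proof
      assume "1 \<le> j"
      have "sgn (D (Suc j)) = - sgn (D j)" using top step by auto
      moreover have "i - j = Suc (i - Suc j)" using step by auto
      ultimately show "sgn (D j) = (-1)^(i-j)" using step.IH by simp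
    qed
  qed
  then show "sgn (x' j - x j) = (-1)^(i-j)" using j unfolding D_def by simp
qed

lemma rate_pos:
  assumes "a0 k > 0 \<and> b0 k > 0 \<and> c0 k > 0 \<and> a1 k > 0 \<and> b1 k > 0 \<and> c1 k > 0"
  shows "ptm_delta a1 b1 c1 k > 0" "ptm_gamma c0 a1 b1 c1 k > 0" "ptm_lambda a0 b0 c0 a1 b1 c1 k > 0"
  using assms by (auto simp: ptm_delta_def ptm_gamma_def ptm_lambda_def)

lemma bmss_pos:
  assumes n: "n \<ge> 1"
    and r: "\<forall>k\<in>{1..n}. a0 k > 0 \<and> b0 k > 0 \<and> c0 k > 0 \<and> a1 k > 0 \<and> b1 k > 0 \<and> c1 k > 0"
    and E: "Ebar > 0"
    and tot: "\<forall>k\<in>{1..n}. Fbar k > 0 \<and> Sbar k > 0"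
    and b: "ptm_bmss n a0 b0 c0 a1 b1 c1 Ebar Fbar Sbar S0 S1 F Y0 Y1"
  shows "\<forall>k\<in>{1..n}. F k > 0 \<and> F k * (1 + ptm_delta a1 b1 c1 k * S1 k) = Fbar k"
    and "\<forall>k. k \<le> n \<longrightarrow> S1 k > 0"
    and "\<forall>k\<in>{1..n}. S0 k > 0"
proof -
  let ?d = "ptm_delta a1 b1 c1" and ?g = "ptm_gamma c0 a1 b1 c1" and ?l = "ptm_lambda a0 b0 c0 a1 b1 c1"
  have ss: "\<forall>i\<in>{1..n}.
        Y0 i = ?g i * F i * S1 i \<and>
        Y1 i = ?d i * F i * S1 i \<and>
        ?l i * F i * S1 i = S0 i * S1 (i - 1) \<and>
        Fbar i = F i + Y1 i \<and>
        Sbar i = S0 i + S1 i + Y0 i + Y1 i + (if i < n then Y0 (i + 1) else 0)"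
    "Ebar = S1 0 + Y0 1"
    and nn: "S1 0 \<ge> 0" "\<forall>i\<in>{1..n}. S0 i \<ge> 0 \<and> S1 i \<ge> 0 \<and> F i \<ge> 0 \<and> Y0 i \<ge> 0 \<and> Y1 i \<ge> 0"
    using b unfolding ptm_bmss_def ptm_steady_state_def by auto
  have lp: "\<forall>k\<in>{1..n}. ?d k > 0 \<and> ?g k > 0 \<and> ?l k > 0" 
  proof
    fix k assume k: "k \<in> {1..n}"
    show "?d k > 0 \<and> ?g k > 0 \<and> ?l k > 0" using rate_pos[of a0 k b0 c0 a1 b1 c1] r k by blast
  qed
  have Fp: "\<forall>k\<in>{1..n}. F k > 0 \<and> F k * (1 + ?d k * S1 k) = Fbar k"
  proof
    fix k assume k: "k \<in> {1..n}"
    have e: "F k * (1 + ?d k * S1 k) = Fbar k" using ss(1) k by (auto simp: algebra_simps)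
    have "F k \<noteq> 0" using e tot k by (metis atLeastAtMost_iff less_irrefl mult_zero_left)
    then show "F k > 0 \<and> F k * (1 + ?d k * S1 k) = Fbar k" using nn k e by force
  qed
  then show "\<forall>k\<in>{1..n}. F k > 0 \<and> F k * (1 + ?d k * S1 k) = Fbar k" .
  have S1p: "\<forall>k. k \<le> n \<longrightarrow> S1 k > 0"
  proof
    fix k show "k \<le> n \<longrightarrow> S1 k > 0"
    proof (induction k)
      case 0
      show ?case
      proof
        have 1: "1 \<in> {1..n}" using n by simp
        show "0 < S1 0"
        proof (rule ccontr)
          assume "\<not> 0 < S1 0"
          then have z: "S1 0 = 0" using nn by simp
          have "?l 1 * F 1 * S1 1 = 0" using ss(1) 1 z by auto
          moreover have "?l 1 > 0" "F 1 > 0" using lp 1 Fp by auto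
          ultimately have "S1 1 = 0" by simp
          then have "Y0 1 = 0" using ss(1) 1 by auto
          then show False using ss(2) z E by simp
        qed
      qed
    next
      case (Suc k)
      show ?case
      proof
        assume a: "Suc k \<le> n"
        have pk: "S1 k > 0" using Suc a by simp
        have k1: "Suc k \<in> {1..n}" using a by simp
        show "0 < S1 (Suc k)"
        proof (rule ccontr)
          assume "\<not> 0 < S1 (Suc k)"
          then have z: "S1 (Suc k) = 0" using nn k1 by force
          have "?l (Suc k) * F (Suc k) * S1 (Suc k) = S0 (Suc k) * S1 (Suc k - 1)" using ss(1) k1 by blast
          then have "S0 (Suc k) * S1 k = 0" using z by simp
          then have s0: "S0 (Suc k) = 0" using pk by simp
          have y: "Y0 (Suc k) = 0" "Y1 (Suc k) = 0" using ss(1) k1 z by auto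
          have y2: "(if Suc k < n then Y0 (Suc k + 1) else 0) = 0"
          proof (cases "Suc k < n")
            case True
            have k2: "Suc k + 1 \<in> {1..n}" using True by simp
            have "?l (Suc k + 1) * F (Suc k + 1) * S1 (Suc k + 1) = 0" using ss(1) k2 z by auto
            moreover have "?l (Suc k + 1) > 0" "F (Suc k + 1) > 0" using lp k2 Fp by blast+
            ultimately have "S1 (Suc k + 1) = 0" by simp
            then show ?thesis using ss(1) k2 True by auto
          qed simp
          have "Sbar (Suc k) = 0" using ss(1) k1 s0 z y y2 by simp
          then show False using tot k1 by (metis less_irrefl)
        qed
      qed
    qed
  qed
  then show "\<forall>k. k \<le> n \<longrightarrow> S1 k > 0" .
  show "\<forall>k\<in>{1..n}. S0 k > 0"
  proof
    fix k assume k: "k \<in> {1..n}"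
    have "?l k * F k * S1 k > 0" using lp k Fp S1p by (simp add: atLeastAtMost_iff)
    then have "S0 k * S1 (k-1) > 0" using ss(1) k by auto
    moreover have "S1 (k-1) > 0" using S1p k by auto
    ultimately show "S0 k > 0" by (simp add: zero_less_mult_iff)
  qed
qed

theorem mainTheorem8:
  fixes n i j :: nat
    and a0 b0 c0 a1 b1 c1 Fbar Sbar Sbar' :: "nat \<Rightarrow> real"
    and Ebar :: real
    and S0 S1 F Y0 Y1 S0' S1' F' Y0' Y1' :: "nat \<Rightarrow> real"
  assumes "n \<ge> 1"
    and "\<forall>k\<in>{1..n}. a0 k > 0 \<and> b0 k > 0 \<and> c0 k > 0 \<and> a1 k > 0 \<and> b1 k > 0 \<and> c1 k > 0"
    and "Ebar > 0"
    and "\<forall>k\<in>{1..n}. Fbar k > 0 \<and> Sbar k > 0 \<and> Sbar' k > 0"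
    and "i \<in> {1..n}"
    and "\<forall>k\<in>{1..n}. k \<noteq> i \<longrightarrow> Sbar' k = Sbar k"
    and "Sbar i < Sbar' i"
    and "ptm_bmss n a0 b0 c0 a1 b1 c1 Ebar Fbar Sbar S0 S1 F Y0 Y1"
    and "ptm_bmss n a0 b0 c0 a1 b1 c1 Ebar Fbar Sbar' S0' S1' F' Y0' Y1'"
    and "j \<in> {1..i}"
  shows "(even (i - j) \<longrightarrow> S1 j < S1' j) \<and> (odd (i - j) \<longrightarrow> S1' j < S1 j)"
proof -
  note A = assms
  let ?d = "ptm_delta a1 b1 c1" and ?g = "ptm_gamma c0 a1 b1 c1" and ?l = "ptm_lambda a0 b0 c0 a1 b1 c1"
  have lp: "\<forall>k\<in>{1..n}. ?d k > 0 \<and> ?g k > 0 \<and> ?l k > 0"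
  proof
    fix k assume k: "k \<in> {1..n}"
    show "?d k > 0 \<and> ?g k > 0 \<and> ?l k > 0" using rate_pos[of a0 k b0 c0 a1 b1 c1] A(2) k by blast
  qed
  have t1: "\<forall>k\<in>{1..n}. Fbar k > 0 \<and> Sbar k > 0" and t2: "\<forall>k\<in>{1..n}. Fbar k > 0 \<and> Sbar' k > 0"
    using A(4) by auto
  note P1 = bmss_pos[OF A(1) A(2) A(3) t1 A(8)]
  note P2 = bmss_pos[OF A(1) A(2) A(3) t2 A(9)]
  have ss: "\<forall>i\<in>{1..n}.
        Y0 i = ?g i * F i * S1 i \<and>
        Y1 i = ?d i * F i * S1 i \<and>
        ?l i * F i * S1 i = S0 i * S1 (i - 1) \<and>
        Fbar i = F i + Y1 i \<and>
        Sbar i = S0 i + S1 i + Y0 i + Y1 i + (if i < n then Y0 (i + 1) else 0)"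
    "Ebar = S1 0 + Y0 1"
    using A(8) unfolding ptm_bmss_def ptm_steady_state_def by auto
  have ss': "\<forall>i\<in>{1..n}.
        Y0' i = ?g i * F' i * S1' i \<and>
        Y1' i = ?d i * F' i * S1' i \<and>
        ?l i * F' i * S1' i = S0' i * S1' (i - 1) \<and>
        Fbar i = F' i + Y1' i \<and>
        Sbar' i = S0' i + S1' i + Y0' i + Y1' i + (if i < n then Y0' (i + 1) else 0)"
    "Ebar = S1' 0 + Y0' 1"
    using A(9) unfolding ptm_bmss_def ptm_steady_state_def by auto
  have one: "1 \<in> {1..n}" using A(1) by simp
  have main: "sgn (S1' j - S1 j) = (-1)^(i-j)"
  proof (rule abstract_main[where x=S1 and x'=S1' and q=S0 and q'=S0' and p="\<lambda>k. F k * S1 k"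
        and p'="\<lambda>k. F' k * S1' k" and l="?l" and g="?g" and c="\<lambda>k. ?g k + ?d k" and Sb=Sbar and Sb'=Sbar'
        and E=Ebar and n=n and i=i])
    show "\<And>k. k \<le> n \<Longrightarrow> S1 k > 0 \<and> S1' k > 0" using P1(2) P2(2) by blast
    show "\<And>k. k \<in> {1..n} \<Longrightarrow> S0 k > 0 \<and> S0' k > 0 \<and> ?l k > 0 \<and> ?g k > 0 \<and> ?g k + ?d k > 0"
      using P1(3) P2(3) lp by (meson add_pos_pos)
    show "\<And>k. k \<in> {1..n} \<Longrightarrow> sgn (F' k * S1' k - F k * S1 k) = sgn (S1' k - S1 k)"
    proof -
      fix k assume k: "k \<in> {1..n}"
      show "sgn (F' k * S1' k - F k * S1 k) = sgn (S1' k - S1 k)"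
        apply (rule Pl[where B="Fbar k" and d="?d k"])
        using P1(1) P2(1) P1(2) P2(2) lp k A(4) by auto
    qed
    show "\<And>k. k \<in> {1..n} \<Longrightarrow> S0 k * S1 (k-1) = ?l k * (F k * S1 k) \<and> S0' k * S1' (k-1) = ?l k * (F' k * S1' k)"
      using ss(1) ss'(1) by (simp add: mult.assoc)
    show "Ebar = S1 0 + ?g 1 * (F 1 * S1 1)" using ss one by (simp add: mult.assoc)
    show "Ebar = S1' 0 + ?g 1 * (F' 1 * S1' 1)" using ss' one by (simp add: mult.assoc)
    show "\<And>k. k \<in> {1..n} \<Longrightarrow> Sbar k = S0 k + S1 k + (?g k + ?d k) * (F k * S1 k) + (if k<n then ?g (k+1) * (F (k+1) * S1 (k+1)) else 0)"
    proof -
      fix k assume k: "k \<in> {1..n}"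
      have k1: "k < n \<Longrightarrow> k+1 \<in> {1..n}" using k by simp
      show "Sbar k = S0 k + S1 k + (?g k + ?d k) * (F k * S1 k) + (if k<n then ?g (k+1) * (F (k+1) * S1 (k+1)) else 0)"
        using ss(1) k k1 by (auto simp: algebra_simps)
    qed
    show "\<And>k. k \<in> {1..n} \<Longrightarrow> Sbar' k = S0' k + S1' k + (?g k + ?d k) * (F' k * S1' k) + (if k<n then ?g (k+1) * (F' (k+1) * S1' (k+1)) else 0)"
    proof -
      fix k assume k: "k \<in> {1..n}"
      have k1: "k < n \<Longrightarrow> k+1 \<in> {1..n}" using k by simp
      show "Sbar' k = S0' k + S1' k + (?g k + ?d k) * (F' k * S1' k) + (if k<n then ?g (k+1) * (F' (k+1) * S1' (k+1)) else 0)"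
        using ss'(1) k k1 by (auto simp: algebra_simps)
    qed
    show "i \<in> {1..n}" by (fact A(5))
    show "\<And>k. k \<in> {1..n} \<Longrightarrow> k \<noteq> i \<Longrightarrow> Sbar' k = Sbar k" using A(6) by blast
    show "Sbar i < Sbar' i" by (fact A(7))
    show "j \<in> {1..i}" by (fact A(10))
  qed
  show ?thesis
  proof (intro conjI impI)
    assume "even (i-j)"
    then have "sgn (S1' j - S1 j) = 1" using main by simp
    then show "S1 j < S1' j" by (simp add: sgn_if split: if_splits)
  next
    assume "odd (i-j)"
    then have "sgn (S1' j - S1 j) = -1" using main by simp
    then show "S1' j < S1 j" by (simp add: sgn_if split: if_splits)
  qed
qed

end
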